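(* Let $\mu_1,\mu_2\in\mathbb{R}$ and $\sigma_1^2,\sigma_2^2\in\mathbb{R}_+\setminus\{0\}$ be such that $\gamma_1:=\lfloor \mu_1-\sigma_1^2\rfloor\le\gamma_2:=\lfloor \mu_2-\sigma_2^2\rfloor$. Then \[ \|\mathrm{TP}(\mu_1,\sigma_1^2)-\mathrm{TP}(\mu_2,\sigma_2^2)\|\le 2\left\{\sigma_1^{-1}|\mu_1-\mu_2|+\sigma_1^{-2}\left(|\sigma_1^2-\sigma_2^2|+1\right)\right\}. \]
   Context: For $\mu\in\mathbb{R}$ and $\sigma^2\ge 0$ set $\gamma(\mu,\sigma^2):=\lfloor\mu-\sigma^2\rfloor$, $\delta(\mu,\sigma^2):=\mu-\sigma^2-\gamma(\mu,\sigma^2)\in[0,1)$ and $\lambda'(\mu,\sigma^2):=\sigma^2+\delta(\mu,\sigma^2)$. The translated Poisson distribution $\mathrm{TP}(\mu,\sigma^2)$ is the probability measure on $\mathbb{Z}$ given by $\mathrm{TP}(\mu,\sigma^2)\{j\}:=\mathrm{Po}(\lambda'(\mu,\sigma^2))\{j-\gamma(\mu,\sigma^2)\}$, $j\in\mathbb{Z}$, where $\mathrm{Po}(\lambda)$ is the Poisson distribution with mean $\lambda$ (so it has mean $\mu$ and variance $\lambda'$). For probability measures $Q,Q'$ on $\mathbb{Z}$, $\|Q-Q'\|:=\sum_{i\in\mathbb{Z}}|Q(i)-Q'(i)|=2\sup_{A\subset\mathbb{Z}}|Q(A)-Q'(A)|$. *)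

theory Defs
  imports "HOL-Analysis.Analysis"
begin

definition poisson_pmf_int :: "real \<Rightarrow> int \<Rightarrow> real" where
  "poisson_pmf_int lam k =
     (if k < 0 then 0 else exp (- lam) * lam ^ nat k / fact (nat k))"

definition tp_gamma :: "real \<Rightarrow> real \<Rightarrow> int" where
  "tp_gamma mu s2 = \<lfloor>mu - s2\<rfloor>"

definition tp_delta :: "real \<Rightarrow> real \<Rightarrow> real" where
  "tp_delta mu s2 = mu - s2 - real_of_int (tp_gamma mu s2)"

definition tp_lambda' :: "real \<Rightarrow> real \<Rightarrow> real" where
  "tp_lambda' mu s2 = s2 + tp_delta mu s2"

definition TP :: "real \<Rightarrow> real \<Rightarrow> int \<Rightarrow> real" where
  "TP mu s2 j = poisson_pmf_int (tp_lambda' mu s2) (j - tp_gamma mu s2)"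

definition tv_norm :: "(int \<Rightarrow> real) \<Rightarrow> (int \<Rightarrow> real) \<Rightarrow> real" where
  "tv_norm Q Q' = (\<Sum>\<^sub>\<infinity>i\<in>(UNIV::int set). \<bar>Q i - Q' i\<bar>)"

end

theory Submission
  imports Defs
begin


definition pn :: "real \<Rightarrow> nat \<Rightarrow> real" where
  "pn a n = exp (- a) * a ^ n / fact n"

lemma pn_nonneg: "a \<ge> 0 \<Longrightarrow> pn a n \<ge> 0"
  by (simp add: pn_def)

lemma pn_pos: "a > 0 \<Longrightarrow> pn a n > 0"
  by (simp add: pn_def)

lemma pn_Suc: "pn a (Suc n) = pn a n * a / real (Suc n)"
  by (simp add: pn_def field_simps)

lemma pn_Suc': "real (Suc n) * pn a (Suc n) = a * pn a n"
  unfolding pn_Suc by (simp add: field_simps del: of_nat_Suc)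

lemma P_nat: "poisson_pmf_int a (int n) = pn a n"
  by (simp add: poisson_pmf_int_def pn_def)

lemma P_neg: "i < 0 \<Longrightarrow> poisson_pmf_int a i = 0"
  by (simp add: poisson_pmf_int_def)

lemma P_nonneg: "a \<ge> 0 \<Longrightarrow> poisson_pmf_int a i \<ge> 0"
  by (simp add: poisson_pmf_int_def)

lemma pn_sums: "pn a sums 1"
proof -
  have "(\<lambda>n. a^n / fact n) sums exp a" using exp_converges[of a] by (simp add: divide_inverse scaleR_conv_of_real mult.commute)
  then have "(\<lambda>n. exp (-a) * (a^n / fact n)) sums (exp (-a) * exp a)" by (rule sums_mult)
  moreover have "pn a = (\<lambda>n. exp (-a) * (a^n / fact n))" by (auto simp: pn_def)
  ultimately show ?thesis by (simp add: exp_minus)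
qed

lemma pn_mean: "(\<lambda>n. real n * pn a n) sums a"
proof -
  have "(\<lambda>n. real (Suc n) * pn a (Suc n)) sums (a * 1)"
    unfolding pn_Suc' by (rule sums_mult[OF pn_sums])
  then show ?thesis by (subst (asm) sums_Suc_iff) simp
qed

lemma pn_m2: "(\<lambda>n. (real n)^2 * pn a n) sums (a * (a + 1))"
proof -
  have "(\<lambda>n. real n * pn a n + pn a n) sums (a + 1)" by (rule sums_add[OF pn_mean pn_sums])
  then have "(\<lambda>n. a * (real n * pn a n + pn a n)) sums (a * (a + 1))" by (rule sums_mult)
  moreover have "a * (real n * pn a n + pn a n) = (real (Suc n))^2 * pn a (Suc n)" for n
  proof -
    have "(real (Suc n))^2 * pn a (Suc n) = real (Suc n) * (real (Suc n) * pn a (Suc n))" by (simp add: power2_eq_square)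
    also have "\<dots> = real (Suc n) * (a * pn a n)" by (simp only: pn_Suc')
    finally show ?thesis by (simp add: algebra_simps)
  qed
  ultimately have "(\<lambda>n. (real (Suc n))^2 * pn a (Suc n)) sums (a * (a + 1))" by simp
  then show ?thesis by (subst (asm) sums_Suc_iff) simp
qed

lemma pn_var: "(\<lambda>n. pn a n * (real n - a)^2) sums a"
proof -
  have "(\<lambda>n. (real n)^2 * pn a n - 2 * a * (real n * pn a n) + a^2 * pn a n) sums (a * (a+1) - 2 * a * a + a^2 * 1)"
    by (intro sums_add sums_diff sums_mult pn_m2 pn_mean pn_sums)
  moreover have "(real n)^2 * pn a n - 2 * a * (real n * pn a n) + a^2 * pn a n = pn a n * (real n - a)^2" for n
    by (simp add: power2_eq_square algebra_simps)
  ultimately show ?thesis by (simp add: power2_eq_square algebra_simps)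
qed

lemma pn_partial_le1: "a \<ge> 0 \<Longrightarrow> sum (pn a) I \<le> 1"
  if "finite I" for I
  using sum_le_suminf[of "pn a" I] pn_sums[of a] that by (auto simp: sums_iff pn_nonneg)

lemma pn_le1: "a \<ge> 0 \<Longrightarrow> pn a n \<le> 1"
  using pn_partial_le1[of "{n}" a] by simp

lemma var_partial: "a \<ge> 0 \<Longrightarrow> (\<Sum>n\<le>N. pn a n * (real n - a)^2) \<le> a"
  using sum_le_suminf[of "\<lambda>n. pn a n * (real n - a)^2" "{..N}"] pn_var[of a]
  by (auto simp: sums_iff pn_nonneg)

lemma S_nat:
  assumes a: "a > 0"
  shows "(\<Sum>n\<le>N. pn a n * \<bar>real n - a\<bar>) \<le> sqrt a"
proof -
  have "(\<Sum>n\<le>N. pn a n * \<bar>real n - a\<bar>)^2 = (\<Sum>n\<le>N. sqrt (pn a n) * (sqrt (pn a n) * \<bar>real n - a\<bar>))^2"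
    using a by (simp add: pn_nonneg mult.assoc[symmetric])
  also have "\<dots> \<le> (\<Sum>n\<le>N. (sqrt (pn a n))^2) * (\<Sum>n\<le>N. (sqrt (pn a n) * \<bar>real n - a\<bar>)^2)"
    by (rule Cauchy_Schwarz_ineq_sum)
  also have "\<dots> = (\<Sum>n\<le>N. pn a n) * (\<Sum>n\<le>N. pn a n * (real n - a)^2)"
    using a by (simp add: pn_nonneg power_mult_distrib)
  also have "\<dots> \<le> 1 * a"
    using a by (intro mult_mono pn_partial_le1 var_partial) (auto intro: sum_nonneg simp: pn_nonneg)
  finally have "(\<Sum>n\<le>N. pn a n * \<bar>real n - a\<bar>)^2 \<le> a" by simp
  then show ?thesis using real_le_rsqrt by blast
qed



lemma int_sum_bound:
  fixes f :: "int \<Rightarrow> real"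
  assumes nn: "\<And>i. f i \<ge> 0" and neg: "\<And>i. i < 0 \<Longrightarrow> f i = 0"
    and bnd: "\<And>N. (\<Sum>n\<le>N. f (int n)) \<le> B" and G: "finite G"
  shows "sum f G \<le> B"
proof -
  define S where "S = nat ` (G \<inter> {0..})"
  have fS: "finite S" using G by (simp add: S_def)
  have "sum f G = sum f (G \<inter> {0..})"
    using G by (intro sum.mono_neutral_right) (auto, metis neg not_le)
  also have "G \<inter> {0..} = int ` S" by (force simp: S_def image_iff)
  also have "sum f (int ` S) = (\<Sum>n\<in>S. f (int n))" by (simp add: sum.reindex)
  also have "\<dots> \<le> (\<Sum>n\<le>Max (insert 0 S). f (int n))"
    using fS nn by (intro sum_mono2) auto
  also have "\<dots> \<le> B" by (rule bnd)
  finally show ?thesis .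
qed

lemma S_int:
  assumes a: "a > 0" and G: "finite G"
  shows "(\<Sum>j\<in>G. \<bar>poisson_pmf_int a (j - 1) - poisson_pmf_int a j\<bar>) \<le> 1 / sqrt a"
proof (rule int_sum_bound[OF _ _ _ G])
  fix N
  have eq: "\<bar>poisson_pmf_int a (int n - 1) - poisson_pmf_int a (int n)\<bar> = pn a n * \<bar>real n - a\<bar> / a" for n
  proof (cases n)
    case 0
    then show ?thesis using a P_nat[of a 0] by (simp add: P_neg pn_nonneg)
  next
    case (Suc m)
    have X: "poisson_pmf_int a (int (Suc m) - 1) = pn a m" using P_nat[of a m] by simp
    have Y: "pn a m = pn a (Suc m) * real (Suc m) / a" using a by (simp add: pn_Suc)
    have "poisson_pmf_int a (int (Suc m) - 1) - poisson_pmf_int a (int (Suc m)) = pn a (Suc m) * (real (Suc m) - a) / a"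
      unfolding X P_nat Y using a by (simp add: right_diff_distrib diff_divide_distrib del: of_nat_Suc)
    then show ?thesis unfolding Suc using a pn_nonneg[of a "Suc m"] by (simp add: abs_mult del: of_nat_Suc)
  qed
  have "(\<Sum>n\<le>N. \<bar>poisson_pmf_int a (int n - 1) - poisson_pmf_int a (int n)\<bar>) = (\<Sum>n\<le>N. pn a n * \<bar>real n - a\<bar>) / a"
    unfolding eq sum_divide_distrib by (rule refl)
  also have "\<dots> \<le> sqrt a / a" using a S_nat[OF a] by (simp add: divide_right_mono)
  also have "sqrt a / a = 1 / sqrt a"
  proof -
    have s: "sqrt a * sqrt a = a" using a by simp
    have "sqrt a > 0" using a by simp
    then show ?thesis using s a by (simp add: divide_simps)
  qed
  finally show "(\<Sum>n\<le>N. \<bar>poisson_pmf_int a (int n - 1) - poisson_pmf_int a (int n)\<bar>) \<le> 1 / sqrt a" .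
qed (auto simp: P_neg)



lemma pn_conv: "pn (a + t) n = (\<Sum>m\<le>n. pn t m * pn a (n - m))"
proof -
  have "(a + t)^n = (t + a)^n" by (simp add: add.commute)
  also have "\<dots> = (\<Sum>k\<le>n. of_nat (n choose k) * t^k * a^(n-k))" by (rule binomial_ring)
  finally have b: "(a + t)^n = (\<Sum>k\<le>n. of_nat (n choose k) * t^k * a^(n-k))" .
  have "pn (a + t) n = exp (-t) * exp (-a) * (a+t)^n / fact n"
    by (simp add: pn_def exp_add[symmetric])
  also have "\<dots> = (\<Sum>k\<le>n. exp (-t) * exp (-a) * (of_nat (n choose k) * t^k * a^(n-k)) / fact n)"
    unfolding b by (simp add: sum_distrib_left sum_divide_distrib)
  also have "\<dots> = (\<Sum>m\<le>n. pn t m * pn a (n - m))"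
  proof (rule sum.cong[OF refl])
    fix k assume "k \<in> {..n}"
    then have kn: "k \<le> n" by simp
    show "exp (-t) * exp (-a) * (of_nat (n choose k) * t^k * a^(n-k)) / fact n = pn t k * pn a (n - k)"
      unfolding binomial_fact[OF kn] pn_def by (simp add: field_simps)
  qed
  finally show ?thesis .
qed

lemma conv_sums:
  "(\<lambda>m. pn t m * poisson_pmf_int a (i - int m)) sums poisson_pmf_int (a + t) i"
proof (cases "i < 0")
  case True
  then have "(\<lambda>m. pn t m * poisson_pmf_int a (i - int m)) = (\<lambda>m. 0)" by (auto simp: P_neg)
  then show ?thesis using True by (simp add: P_neg)
next
  case False
  then obtain n where i: "i = int n" by (metis nonneg_int_cases not_less)
  have "(\<lambda>m. pn t m * poisson_pmf_int a (i - int m)) sums (\<Sum>m\<le>n. pn t m * poisson_pmf_int a (i - int m))"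
    by (rule sums_finite) (auto simp: i P_neg)
  also have "(\<Sum>m\<le>n. pn t m * poisson_pmf_int a (i - int m)) = (\<Sum>m\<le>n. pn t m * pn a (n - m))"
  proof (rule sum.cong[OF refl])
    fix m assume "m \<in> {..n}"
    then have "i - int m = int (n - m)" using i by auto
    then show "pn t m * poisson_pmf_int a (i - int m) = pn t m * pn a (n - m)" by (simp add: P_nat)
  qed
  also have "\<dots> = poisson_pmf_int (a + t) i" by (simp add: i P_nat pn_conv)
  finally show ?thesis .
qed

lemma P_le1: "a \<ge> 0 \<Longrightarrow> poisson_pmf_int a i \<le> 1"
proof (cases "i < 0")
  case True then show ?thesis by (simp add: P_neg)
next
  case False
  assume a: "a \<ge> 0"
  from False obtain n where "i = int n" by (metis nonneg_int_cases not_less)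
  then show ?thesis using pn_le1[OF a] by (simp add: P_nat)
qed

lemma shift_bound:
  assumes a: "a > 0" and F: "finite F"
  shows "(\<Sum>i\<in>F. \<bar>poisson_pmf_int a (i - int m) - poisson_pmf_int a i\<bar>) \<le> real m / sqrt a"
proof (induction m)
  case 0
  then show ?case by simp
next
  case (Suc m)
  have "(\<Sum>i\<in>F. \<bar>poisson_pmf_int a (i - int (Suc m)) - poisson_pmf_int a i\<bar>)
     \<le> (\<Sum>i\<in>F. \<bar>poisson_pmf_int a ((i - int m) - 1) - poisson_pmf_int a (i - int m)\<bar> + \<bar>poisson_pmf_int a (i - int m) - poisson_pmf_int a i\<bar>)"
    by (intro sum_mono) (simp add: algebra_simps)
  also have "\<dots> = (\<Sum>i\<in>F. \<bar>poisson_pmf_int a ((i - int m) - 1) - poisson_pmf_int a (i - int m)\<bar>) + (\<Sum>i\<in>F. \<bar>poisson_pmf_int a (i - int m) - poisson_pmf_int a i\<bar>)"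
    by (rule sum.distrib)
  also have "(\<Sum>i\<in>F. \<bar>poisson_pmf_int a ((i - int m) - 1) - poisson_pmf_int a (i - int m)\<bar>)
       = (\<Sum>j\<in>(\<lambda>i. i - int m) ` F. \<bar>poisson_pmf_int a (j - 1) - poisson_pmf_int a j\<bar>)"
    by (subst sum.reindex) (auto simp: inj_on_def)
  also have "\<dots> \<le> 1 / sqrt a" using S_int[OF a] F by simp
  finally show ?case using Suc.IH by (simp add: add_divide_distrib)
qed

lemma thin_bound:
  assumes a: "a > 0" and t: "t \<ge> 0" and F: "finite F"
  shows "(\<Sum>i\<in>F. \<bar>poisson_pmf_int (a + t) i - poisson_pmf_int a i\<bar>) \<le> t / sqrt a"
proof -
  define X where "X i m = pn t m * (poisson_pmf_int a (i - int m) - poisson_pmf_int a i)" for i m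
  have Xs: "X i sums (poisson_pmf_int (a + t) i - poisson_pmf_int a i)" for i
  proof -
    have "(\<lambda>m. pn t m * poisson_pmf_int a (i - int m) - pn t m * poisson_pmf_int a i) sums (poisson_pmf_int (a + t) i - 1 * poisson_pmf_int a i)"
      by (intro sums_diff conv_sums sums_mult2 pn_sums)
    moreover have "X i = (\<lambda>m. pn t m * poisson_pmf_int a (i - int m) - pn t m * poisson_pmf_int a i)"
      by (auto simp: X_def right_diff_distrib)
    ultimately show ?thesis by simp
  qed
  have absX: "summable (\<lambda>m. \<bar>X i m\<bar>)" for i
  proof (rule summable_comparison_test')
    show "summable (\<lambda>m. 2 * pn t m)" using pn_sums summable_mult sums_summable by blast
    fix m
    have "\<bar>poisson_pmf_int a (i - int m) - poisson_pmf_int a i\<bar> \<le> 2"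
      using P_le1[of a] P_nonneg[of a] a by (smt (verit))
    then have "pn t m * \<bar>poisson_pmf_int a (i - int m) - poisson_pmf_int a i\<bar> \<le> pn t m * 2"
      using pn_nonneg[OF t, of m] by (rule mult_left_mono)
    then show "norm \<bar>X i m\<bar> \<le> 2 * pn t m" using pn_nonneg[OF t, of m]
      by (simp add: X_def abs_mult)
  qed
  have "(\<Sum>i\<in>F. \<bar>poisson_pmf_int (a + t) i - poisson_pmf_int a i\<bar>) = (\<Sum>i\<in>F. \<bar>suminf (X i)\<bar>)"
    using Xs by (simp add: sums_iff)
  also have "\<dots> \<le> (\<Sum>i\<in>F. suminf (\<lambda>m. \<bar>X i m\<bar>))"
    by (intro sum_mono summable_rabs absX)
  also have "\<dots> = suminf (\<lambda>m. \<Sum>i\<in>F. \<bar>X i m\<bar>)"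
    by (rule suminf_sum[symmetric]) (rule absX)
  also have "\<dots> \<le> suminf (\<lambda>m. real m * pn t m * (1 / sqrt a))"
  proof (rule suminf_le)
    fix m
    have "(\<Sum>i\<in>F. \<bar>X i m\<bar>) = pn t m * (\<Sum>i\<in>F. \<bar>poisson_pmf_int a (i - int m) - poisson_pmf_int a i\<bar>)"
      using pn_nonneg[OF t, of m] by (simp add: X_def abs_mult sum_distrib_left)
    also have "\<dots> \<le> pn t m * (real m / sqrt a)"
      by (intro mult_left_mono shift_bound a F pn_nonneg t)
    finally show "(\<Sum>i\<in>F. \<bar>X i m\<bar>) \<le> real m * pn t m * (1 / sqrt a)" by (simp add: mult_ac)
  next
    show "summable (\<lambda>m. \<Sum>i\<in>F. \<bar>X i m\<bar>)" by (intro summable_sum absX)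
  next
    show "summable (\<lambda>m. real m * pn t m * (1 / sqrt a))"
      using pn_mean[of t] by (intro summable_mult2) (simp add: sums_summable)
  qed
  also have "\<dots> = t * (1 / sqrt a)"
    using sums_mult2[OF pn_mean[of t], of "1 / sqrt a"] by (simp add: sums_iff)
  finally show ?thesis by simp
qed



definition Lcdf :: "real \<Rightarrow> nat \<Rightarrow> real" where "Lcdf lam j = (\<Sum>i\<le>j. pn lam i)"

context
  fixes lam :: real
  assumes lam: "lam > 0"
begin


lemma Lcdf_nonneg: "Lcdf lam j \<ge> 0"
  unfolding Lcdf_def using lam by (intro sum_nonneg) (simp add: pn_nonneg)

lemma Lcdf_le1: "Lcdf lam j \<le> 1"
  unfolding Lcdf_def using lam by (intro pn_partial_le1) auto

lemma Lcdf_Suc: "Lcdf lam (Suc j) = Lcdf lam j + pn lam (Suc j)"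
  by (simp add: Lcdf_def)

lemma K1: "Lcdf lam j * lam \<le> real (Suc j) * Lcdf lam (Suc j)"
proof -
  have "Lcdf lam j * lam = (\<Sum>i\<le>j. real (Suc i) * pn lam (Suc i))"
    unfolding Lcdf_def sum_distrib_right by (intro sum.cong refl, subst pn_Suc') (simp add: mult.commute)
  also have "\<dots> \<le> (\<Sum>i\<le>j. real (Suc j) * pn lam (Suc i))"
    using lam by (intro sum_mono mult_right_mono) (auto simp: pn_nonneg)
  also have "\<dots> = real (Suc j) * (\<Sum>i\<le>j. pn lam (Suc i))" by (simp add: sum_distrib_left)
  also have "(\<Sum>i\<le>j. pn lam (Suc i)) \<le> Lcdf lam (Suc j)"
    unfolding Lcdf_def sum.atMost_Suc_shift using lam by (simp add: pn_nonneg)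
  then have "real (Suc j) * (\<Sum>i\<le>j. pn lam (Suc i)) \<le> real (Suc j) * Lcdf lam (Suc j)" by (intro mult_left_mono) auto
  finally show ?thesis .
qed

lemma M1: "Lcdf lam j / pn lam j \<le> Lcdf lam (Suc j) / pn lam (Suc j)"
proof -
  have p: "pn lam j > 0" using lam by (simp add: pn_pos)
  have "Lcdf lam (Suc j) / pn lam (Suc j) = Lcdf lam (Suc j) * real (Suc j) / (pn lam j * lam)"
    using lam p by (simp add: pn_Suc field_simps del: of_nat_Suc)
  moreover have "Lcdf lam j / pn lam j \<le> Lcdf lam (Suc j) * real (Suc j) / (pn lam j * lam)"
    using K1[of j] p lam by (simp add: field_simps del: of_nat_Suc)
  ultimately show ?thesis by simp
qed

lemma mean_partial: "(\<Sum>i\<le>Suc j. real i * pn lam i) = lam * Lcdf lam j"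
  unfolding Lcdf_def sum.atMost_Suc_shift by (simp add: pn_Suc' sum_distrib_left del: of_nat_Suc)

lemma M2: "(1 - Lcdf lam (Suc j)) / pn lam (Suc j) \<le> (1 - Lcdf lam j) / pn lam j"
proof -
  have p: "pn lam j > 0" using lam by (simp add: pn_pos)
  define k where "k = Suc (Suc j)"
  have sm: "summable (\<lambda>i. real i * pn lam i)" using pn_mean sums_summable by blast
  have s0: "summable (pn lam)" using pn_sums sums_summable by blast
  have e1: "lam = (\<Sum>n. real (n + k) * pn lam (n + k)) + (\<Sum>i<k. real i * pn lam i)"
    using suminf_split_initial_segment[OF sm, of k] pn_mean[of lam] by (simp add: sums_iff)
  have e2: "1 = (\<Sum>n. pn lam (n + k)) + (\<Sum>i<k. pn lam i)"
    using suminf_split_initial_segment[OF s0, of k] pn_sums[of lam] by (simp add: sums_iff)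
  have k1: "{..<k} = {..Suc j}" by (auto simp: k_def)
  have sm': "summable (\<lambda>n. real (n + k) * pn lam (n + k))" using sm by (subst summable_iff_shift)
  have s0': "summable (\<lambda>n. pn lam (n + k))" using s0 by (subst summable_iff_shift)
  have "real (Suc j) * (1 - Lcdf lam (Suc j)) = (\<Sum>n. real (Suc j) * pn lam (n + k))"
    using e2 k1 by (simp add: Lcdf_def suminf_mult[OF s0'] del: of_nat_Suc)
  also have "\<dots> \<le> (\<Sum>n. real (n + k) * pn lam (n + k))"
    using sm' s0' lam by (intro suminf_le mult_right_mono) (auto simp: k_def pn_nonneg intro: summable_mult)
  also have "\<dots> = lam - lam * Lcdf lam j" using e1 k1 mean_partial[of j] by simp
  finally have X: "real (Suc j) * (1 - Lcdf lam (Suc j)) \<le> lam * (1 - Lcdf lam j)" by (simp add: algebra_simps)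
  have "(1 - Lcdf lam (Suc j)) / pn lam (Suc j) = real (Suc j) * (1 - Lcdf lam (Suc j)) / (pn lam j * lam)"
    using lam p by (simp add: pn_Suc field_simps del: of_nat_Suc)
  also have "\<dots> \<le> lam * (1 - Lcdf lam j) / (pn lam j * lam)"
    using X p lam by (intro divide_right_mono) auto
  also have "\<dots> = (1 - Lcdf lam j) / pn lam j" using lam by simp
  finally show ?thesis .
qed

lemma M2_iter: "m \<le> n \<Longrightarrow> (1 - Lcdf lam n) / pn lam n \<le> (1 - Lcdf lam m) / pn lam m"
proof (induction n)
  case 0 then show ?case by simp
next
  case (Suc n)
  show ?case
  proof (cases "m = Suc n")
    case False
    then have "m \<le> n" using Suc.prems by simp
    then show ?thesis using Suc.IH M2[of n] by linarith
  qed simp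
qed

end


context
  fixes lam :: real and k :: nat and A :: "nat set"
  assumes lam: "lam > 0" and mu: "lam - real k > 0" and A: "finite A"
begin

definition "st_pA = (\<Sum>r\<in>A. pn lam r)"
definition "st_h j = (if j \<in> A then 1 else 0) - st_pA"
definition "st_G j = (\<Sum>i\<le>j. st_h i * pn lam i)"
definition "st_g j = (case j of 0 \<Rightarrow> 0 | Suc i \<Rightarrow> st_G i / (lam * pn lam i))"
definition "st_q n = (if n < k then 0 else pn (lam - real k) (n - k))"

lemma st_pA_bounds: "0 \<le> st_pA" "st_pA \<le> 1"
  unfolding st_pA_def using lam A by (auto intro: sum_nonneg pn_partial_le1 simp: pn_nonneg)

lemma st_h_bound: "\<bar>st_h j\<bar> \<le> 1"
  using st_pA_bounds by (simp add: st_h_def)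

lemma stein_eq: "lam * st_g (Suc j) - real j * st_g j = st_h j"
proof (cases j)
  case 0
  have "pn lam 0 > 0" using lam by (simp add: pn_pos)
  then show ?thesis using 0 lam by (simp add: st_g_def st_G_def)
next
  case (Suc i)
  have p: "pn lam i > 0" "pn lam (Suc i) > 0" using lam by (simp_all add: pn_pos)
  have G: "st_G (Suc i) = st_G i + st_h (Suc i) * pn lam (Suc i)" by (simp add: st_G_def)
  have sp: "real (Suc i) > 0" by simp
  have "real (Suc i) * (st_G i / (lam * pn lam i)) = st_G i / pn lam (Suc i)"
    unfolding pn_Suc using p lam sp by (simp add: field_simps del: of_nat_Suc)
  then show ?thesis using Suc p lam G by (simp add: st_g_def field_simps del: of_nat_Suc) metis
qed

lemma st_q_nonneg: "st_q n \<ge> 0"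
  using mu by (simp add: st_q_def pn_nonneg)

lemma st_q_rec: "real (Suc j) * st_q (Suc j) = (lam - real k) * st_q j + real k * st_q (Suc j)"
proof (cases "Suc j < k")
  case True then show ?thesis by (simp add: st_q_def)
next
  case False
  show ?thesis
  proof (cases "Suc j = k")
    case True then show ?thesis by (simp add: st_q_def)
  next
    case False2: False
    then obtain n where n: "Suc j - k = Suc n" "j - k = n" "\<not> j < k"
      using False by (metis Suc_diff_le diff_Suc_Suc less_Suc_eq_le not_less_eq_eq Suc_leI linorder_not_less le_neq_implies_less)
    have e: "real (Suc j) = real k + real (Suc n)" using n False by linarith
    show ?thesis using n False pn_Suc'[of n "lam - real k"]
      unfolding st_q_def e by (simp add: distrib_right del: of_nat_Suc)
  qed
qed

lemma identity: "(\<Sum>j\<le>N. st_h j * st_q j) = real k * (\<Sum>j\<le>N. st_q j * (st_g (Suc j) - st_g j)) + (lam - real k) * st_q N * st_g (Suc N)"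
proof (induction N)
  case 0
  have "st_h 0 = lam * st_g (Suc 0)" using stein_eq[of 0] by simp
  then show ?case by (simp add: st_g_def algebra_simps)
next
  case (Suc N)
  have h: "st_h (Suc N) = lam * st_g (Suc (Suc N)) - real (Suc N) * st_g (Suc N)" using stein_eq[of "Suc N"] by simp
  have "(\<Sum>j\<le>Suc N. st_h j * st_q j) = (\<Sum>j\<le>N. st_h j * st_q j) + st_h (Suc N) * st_q (Suc N)" by simp
  also have "st_h (Suc N) * st_q (Suc N) = lam * st_g (Suc (Suc N)) * st_q (Suc N) - st_g (Suc N) * (real (Suc N) * st_q (Suc N))"
    unfolding h by (simp add: algebra_simps)
  also have "real (Suc N) * st_q (Suc N) = (lam - real k) * st_q N + real k * st_q (Suc N)" by (rule st_q_rec)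
  finally show ?case using Suc.IH by (simp add: algebra_simps)
qed


lemma st_G_decomp: "st_G j = (\<Sum>r\<in>A. pn lam r * ((if r \<le> j then 1 else 0) - Lcdf lam j))"
proof -
  have "st_G j = (\<Sum>i\<le>j. (if i \<in> A then pn lam i else 0) - st_pA * pn lam i)"
    unfolding st_G_def st_h_def by (intro sum.cong) (auto simp: algebra_simps)
  also have "\<dots> = (\<Sum>i\<le>j. (if i \<in> A then pn lam i else 0)) - st_pA * Lcdf lam j"
    using lam by (simp add: sum_subtractf sum_distrib_left Lcdf_def)
  also have "(\<Sum>i\<le>j. (if i \<in> A then pn lam i else 0)) = (\<Sum>r\<in>A. (if r \<le> j then pn lam r else 0))"
  proof -
    have "(\<Sum>i\<le>j. (if i \<in> A then pn lam i else 0)) = sum (pn lam) ({..j} \<inter> A)"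
      using sum.inter_restrict[of "{..j}" "pn lam" A] by simp
    also have "\<dots> = sum (pn lam) (A \<inter> {..j})" by (simp add: Int_commute)
    also have "\<dots> = (\<Sum>r\<in>A. (if r \<le> j then pn lam r else 0))"
      using sum.inter_restrict[OF A, of "pn lam" "{..j}"] by simp
    finally show ?thesis .
  qed
  finally have X: "st_G j = (\<Sum>r\<in>A. if r \<le> j then pn lam r else 0) - st_pA * Lcdf lam j" .
  have "(\<Sum>r\<in>A. pn lam r * ((if r \<le> j then 1 else 0) - Lcdf lam j)) = (\<Sum>r\<in>A. (if r \<le> j then pn lam r else 0) - pn lam r * Lcdf lam j)"
    by (intro sum.cong) (auto simp: right_diff_distrib)
  also have "\<dots> = (\<Sum>r\<in>A. if r \<le> j then pn lam r else 0) - st_pA * Lcdf lam j"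
    by (simp add: sum_subtractf st_pA_def sum_distrib_right)
  finally show ?thesis using X by simp
qed

definition "st_w i r = ((if r \<le> Suc i then 1 else 0) - Lcdf lam (Suc i)) / pn lam (Suc i) - ((if r \<le> i then 1 else 0) - Lcdf lam i) / pn lam i"

lemma dg_decomp: "lam * (st_g (Suc (Suc i)) - st_g (Suc i)) = (\<Sum>r\<in>A. pn lam r * st_w i r)"
proof -
  have p: "pn lam i > 0" "pn lam (Suc i) > 0" using lam by (simp_all add: pn_pos)
  have "lam * (st_g (Suc (Suc i)) - st_g (Suc i)) = st_G (Suc i) / pn lam (Suc i) - st_G i / pn lam i"
    using p lam by (simp add: st_g_def field_simps)
  also have "\<dots> = (\<Sum>r\<in>A. pn lam r * st_w i r)"
    unfolding st_G_decomp st_w_def by (simp add: diff_divide_distrib sum_divide_distrib sum_subtractf right_diff_distrib)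
  finally show ?thesis .
qed

lemma st_w_nonpos: "r \<noteq> Suc i \<Longrightarrow> st_w i r \<le> 0"
proof -
  assume r: "r \<noteq> Suc i"
  show ?thesis
  proof (cases "r \<le> i")
    case True
    then show ?thesis using M2[OF lam, of i] by (simp add: st_w_def)
  next
    case False
    then have "\<not> r \<le> Suc i" using r by simp
    then show ?thesis using False M1[OF lam, of i] by (simp add: st_w_def)
  qed
qed

lemma st_w_diag: "0 \<le> pn lam (Suc i) * st_w i (Suc i)" "pn lam (Suc i) * st_w i (Suc i) \<le> 1"
proof -
  have p: "pn lam i > 0" "pn lam (Suc i) > 0" using lam by (simp_all add: pn_pos)
  have e: "pn lam (Suc i) * st_w i (Suc i) = (1 - Lcdf lam (Suc i)) + Lcdf lam i * lam / real (Suc i)"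
    using p lam unfolding st_w_def by (simp add: pn_Suc field_simps del: of_nat_Suc)
  have a: "Lcdf lam i * lam / real (Suc i) \<le> Lcdf lam (Suc i)"
  proof -
    have "Lcdf lam i * lam / real (Suc i) \<le> real (Suc i) * Lcdf lam (Suc i) / real (Suc i)"
      by (rule divide_right_mono[OF K1[OF lam]]) simp
    then show ?thesis by simp
  qed
  show "0 \<le> pn lam (Suc i) * st_w i (Suc i)" unfolding e
    using Lcdf_le1[OF lam] Lcdf_nonneg[OF lam, of i] lam by simp
  show "pn lam (Suc i) * st_w i (Suc i) \<le> 1" unfolding e using a by simp
qed

lemma dg_bound: "\<bar>st_g (Suc j) - st_g j\<bar> \<le> 1 / lam"
proof (cases j)
  case 0
  have "lam * st_g (Suc 0) = st_h 0" using stein_eq[of 0] by simp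
  then have "st_g (Suc 0) = st_h 0 / lam" using lam by (simp add: field_simps)
  then show ?thesis using 0 st_h_bound[of 0] lam by (simp add: st_g_def abs_divide divide_right_mono)
next
  case (Suc i)
  define D where "D = (\<Sum>r\<in>A. pn lam r * st_w i r)"
  have pp: "\<And>r. pn lam r \<ge> 0" using lam by (simp add: pn_nonneg)
  have up: "D \<le> 1"
  proof -
    have "D \<le> (\<Sum>r\<in>A. if r = Suc i then pn lam (Suc i) * st_w i (Suc i) else 0)"
      unfolding D_def using st_w_nonpos pp
      by (intro sum_mono) (auto simp: mult_nonneg_nonpos)
    also have "\<dots> \<le> pn lam (Suc i) * st_w i (Suc i)"
      using A st_w_diag by (simp add: sum.delta)
    finally show ?thesis using st_w_diag(2)[of i] by linarith
  qed
  have lo: "D \<ge> -1"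
  proof -
    define M where "M = Max (insert (Suc i) A)"
    have AM: "A \<subseteq> {..M}" and iM: "Suc i \<le> M" using A by (auto simp: M_def)
    have "D \<ge> (\<Sum>r\<in>A. if r = Suc i then 0 else pn lam r * st_w i r)"
      unfolding D_def using st_w_diag by (intro sum_mono) auto
    moreover have "(\<Sum>r\<in>A. if r = Suc i then 0 else pn lam r * st_w i r) \<ge> (\<Sum>r\<le>M. if r = Suc i then 0 else pn lam r * st_w i r)"
    proof -
      have "(\<Sum>r\<le>M. if r = Suc i then 0 else pn lam r * st_w i r) = (\<Sum>r\<in>A. if r = Suc i then 0 else pn lam r * st_w i r) + (\<Sum>r\<in>{..M} - A. if r = Suc i then 0 else pn lam r * st_w i r)"
        by (subst sum.subset_diff[OF AM]) (auto simp: add.commute)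
      moreover have "(\<Sum>r\<in>{..M} - A. if r = Suc i then 0 else pn lam r * st_w i r) \<le> 0"
        using st_w_nonpos pp by (intro sum_nonpos) (auto simp: mult_nonneg_nonpos)
      ultimately show ?thesis by simp
    qed
    moreover have "(\<Sum>r\<le>M. if r = Suc i then 0 else pn lam r * st_w i r) = (\<Sum>r\<le>M. pn lam r * st_w i r) - pn lam (Suc i) * st_w i (Suc i)"
    proof -
      have "(\<Sum>r\<le>M. pn lam r * st_w i r) = (\<Sum>r\<le>M. (if r = Suc i then 0 else pn lam r * st_w i r) + (if r = Suc i then pn lam (Suc i) * st_w i (Suc i) else 0))"
        by (intro sum.cong) auto
      also have "\<dots> = (\<Sum>r\<le>M. if r = Suc i then 0 else pn lam r * st_w i r) + pn lam (Suc i) * st_w i (Suc i)"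
        using iM by (simp add: sum.distrib)
      finally show ?thesis by simp
    qed
    moreover have "(\<Sum>r\<le>M. pn lam r * st_w i r) \<ge> 0"
    proof -
      have p: "pn lam i > 0" "pn lam (Suc i) > 0" using lam by (simp_all add: pn_pos)
      have s1: "(\<Sum>r\<le>M. pn lam r * (if r \<le> x then 1 else 0)) = Lcdf lam x" if "x \<le> M" for x
      proof -
        have "(\<Sum>r\<le>M. pn lam r * (if r \<le> x then 1 else 0)) = (\<Sum>r\<le>M. if r \<in> {..x} then pn lam r else 0)"
          by (intro sum.cong) auto
        also have "\<dots> = (\<Sum>r\<in>{..M} \<inter> {..x}. pn lam r)"
          using sum.inter_restrict[of "{..M}" "pn lam" "{..x}"] by simp
        also have "{..M} \<inter> {..x} = {..x}" using that by auto
        finally show ?thesis by (simp add: Lcdf_def)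
      qed
      have s2: "(\<Sum>r\<le>M. pn lam r * ((if r \<le> x then 1 else 0) - Lcdf lam x)) = Lcdf lam x - Lcdf lam M * Lcdf lam x" if "x \<le> M" for x
        using s1[OF that] by (simp add: right_diff_distrib sum_subtractf sum_distrib_right[symmetric] Lcdf_def)
      have "(\<Sum>r\<le>M. pn lam r * st_w i r) = (\<Sum>r\<le>M. pn lam r * ((if r \<le> Suc i then 1 else 0) - Lcdf lam (Suc i)) / pn lam (Suc i) - pn lam r * ((if r \<le> i then 1 else 0) - Lcdf lam i) / pn lam i)"
        unfolding st_w_def by (intro sum.cong refl) (simp add: right_diff_distrib)
      also have "\<dots> = (\<Sum>r\<le>M. pn lam r * ((if r \<le> Suc i then 1 else 0) - Lcdf lam (Suc i))) / pn lam (Suc i) - (\<Sum>r\<le>M. pn lam r * ((if r \<le> i then 1 else 0) - Lcdf lam i)) / pn lam i"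
        by (simp add: sum_subtractf sum_divide_distrib)
      also have "\<dots> = (Lcdf lam (Suc i) - Lcdf lam M * Lcdf lam (Suc i)) / pn lam (Suc i) - (Lcdf lam i - Lcdf lam M * Lcdf lam i) / pn lam i"
        using s2[of "Suc i"] s2[of i] iM by simp
      also have "\<dots> = (1 - Lcdf lam M) * (Lcdf lam (Suc i) / pn lam (Suc i) - Lcdf lam i / pn lam i)"
        by (simp add: algebra_simps diff_divide_distrib)
      also have "\<dots> \<ge> 0" using Lcdf_le1[OF lam, of M] M1[OF lam, of i] by simp
      finally show ?thesis .
    qed
    ultimately show ?thesis using st_w_diag(2)[of i] by linarith
  qed
  have "lam * (st_g (Suc j) - st_g j) = D" using dg_decomp[of i] Suc D_def by simp
  then have "\<bar>lam * (st_g (Suc j) - st_g j)\<bar> \<le> 1" using up lo by simp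
  then have "lam * \<bar>st_g (Suc j) - st_g j\<bar> \<le> 1" using lam by (simp add: abs_mult)
  then show ?thesis using lam by (simp add: field_simps)
qed


lemma q_sums: "st_q sums 1"
proof -
  have "(\<lambda>n. st_q (n + k)) = pn (lam - real k)" by (auto simp: st_q_def)
  then have "(\<lambda>n. st_q (n + k)) sums 1" using pn_sums by simp
  moreover have "(\<Sum>i<k. st_q i) = 0" by (simp add: st_q_def)
  ultimately show ?thesis using sums_iff_shift[of st_q k 1] by simp
qed

lemma q_partial: "(\<Sum>j\<le>N. st_q j) \<le> 1"
  using sum_le_suminf[of st_q "{..N}"] q_sums st_q_nonneg by (auto simp: sums_iff)

lemma main_ineq: "\<bar>\<Sum>j\<le>N. st_h j * st_q j\<bar> \<le> real k / lam + (lam - real k) * st_q N * \<bar>st_g (Suc N)\<bar>"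
proof -
  have "\<bar>\<Sum>j\<le>N. st_q j * (st_g (Suc j) - st_g j)\<bar> \<le> (\<Sum>j\<le>N. st_q j * (1 / lam))"
  proof (rule order_trans[OF sum_abs], rule sum_mono)
    fix j
    have "st_q j * \<bar>st_g (Suc j) - st_g j\<bar> \<le> st_q j * (1 / lam)"
      by (intro mult_left_mono dg_bound st_q_nonneg)
    then show "\<bar>st_q j * (st_g (Suc j) - st_g j)\<bar> \<le> st_q j * (1 / lam)"
      using st_q_nonneg[of j] by (simp add: abs_mult)
  qed
  also have "\<dots> = (\<Sum>j\<le>N. st_q j) * (1 / lam)" by (simp add: sum_distrib_right sum_divide_distrib)
  also have "\<dots> \<le> 1 * (1 / lam)" using q_partial[of N] lam by (intro mult_right_mono) auto
  finally have a: "\<bar>\<Sum>j\<le>N. st_q j * (st_g (Suc j) - st_g j)\<bar> \<le> 1 / lam" by simp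
  have "\<bar>\<Sum>j\<le>N. st_h j * st_q j\<bar> \<le> \<bar>real k * (\<Sum>j\<le>N. st_q j * (st_g (Suc j) - st_g j))\<bar> + \<bar>(lam - real k) * st_q N * st_g (Suc N)\<bar>"
    unfolding identity by (rule abs_triangle_ineq)
  also have "\<bar>real k * (\<Sum>j\<le>N. st_q j * (st_g (Suc j) - st_g j))\<bar> \<le> real k * (1 / lam)"
    using mult_left_mono[OF a, of "real k"] by (simp add: abs_mult)
  also have "\<bar>(lam - real k) * st_q N * st_g (Suc N)\<bar> = (lam - real k) * st_q N * \<bar>st_g (Suc N)\<bar>"
    using mu st_q_nonneg[of N] by (simp add: abs_mult)
  finally show ?thesis by simp
qed

lemma g_tail:
  assumes AM: "A \<subseteq> {..M0}" and N: "M0 \<le> N"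
  shows "\<bar>st_g (Suc N)\<bar> \<le> (1 - Lcdf lam M0) / (lam * pn lam M0)"
proof -
  have p: "pn lam N > 0" "pn lam M0 > 0" using lam by (simp_all add: pn_pos)
  have "st_G N = (\<Sum>r\<in>A. pn lam r * (1 - Lcdf lam N))"
    unfolding st_G_decomp using AM N by (intro sum.cong) auto
  also have "\<dots> = st_pA * (1 - Lcdf lam N)" by (simp add: st_pA_def sum_distrib_right)
  finally have G: "st_G N = st_pA * (1 - Lcdf lam N)" .
  have "\<bar>st_g (Suc N)\<bar> = st_pA * ((1 - Lcdf lam N) / pn lam N) / lam"
    using G p lam st_pA_bounds Lcdf_le1[OF lam, of N] by (simp add: st_g_def abs_mult abs_divide)
  also have "\<dots> \<le> 1 * ((1 - Lcdf lam M0) / pn lam M0) / lam"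
    using st_pA_bounds Lcdf_le1[OF lam, of N] p lam M2_iter[OF lam N]
    by (intro divide_right_mono mult_mono) auto
  finally show ?thesis by (simp add: mult.commute)
qed

lemma stein_final: "\<bar>(\<Sum>r\<in>A. st_q r) - st_pA\<bar> \<le> real k / lam"
proof -
  define M0 where "M0 = Max (insert 0 A)"
  have AM: "A \<subseteq> {..M0}" using A by (auto simp: M0_def)
  define C where "C = (1 - Lcdf lam M0) / (lam * pn lam M0)"
  have lim1: "(\<lambda>N. \<bar>(\<Sum>r\<in>A. st_q r) - st_pA * (\<Sum>j\<le>N. st_q j)\<bar>) \<longlonglongrightarrow> \<bar>(\<Sum>r\<in>A. st_q r) - st_pA * 1\<bar>"
    using q_sums unfolding sums_def_le by (intro tendsto_intros)
  have q0: "st_q \<longlonglongrightarrow> 0" using q_sums sums_summable summable_LIMSEQ_zero by blast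
  have lim2: "(\<lambda>N. real k / lam + (lam - real k) * C * st_q N) \<longlonglongrightarrow> real k / lam + (lam - real k) * C * 0"
    by (intro tendsto_intros q0)
  have ev: "eventually (\<lambda>N. \<bar>(\<Sum>r\<in>A. st_q r) - st_pA * (\<Sum>j\<le>N. st_q j)\<bar> \<le> real k / lam + (lam - real k) * C * st_q N) sequentially"
    unfolding eventually_sequentially
  proof (intro exI allI impI)
    fix N assume N: "M0 \<le> N"
    have "(\<Sum>j\<le>N. st_h j * st_q j) = (\<Sum>j\<le>N. (if j \<in> A then st_q j else 0) - st_pA * st_q j)"
      by (intro sum.cong) (auto simp: st_h_def algebra_simps)
    also have "\<dots> = (\<Sum>j\<le>N. (if j \<in> A then st_q j else 0)) - st_pA * (\<Sum>j\<le>N. st_q j)"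
      by (simp add: sum_subtractf sum_distrib_left)
    also have "(\<Sum>j\<le>N. (if j \<in> A then st_q j else 0)) = (\<Sum>r\<in>A. st_q r)"
    proof -
      have "(\<Sum>j\<le>N. (if j \<in> A then st_q j else 0)) = sum st_q ({..N} \<inter> A)"
        using sum.inter_restrict[of "{..N}" st_q A] by simp
      also have "{..N} \<inter> A = A" using AM N by auto
      finally show ?thesis .
    qed
    finally have e: "(\<Sum>j\<le>N. st_h j * st_q j) = (\<Sum>r\<in>A. st_q r) - st_pA * (\<Sum>j\<le>N. st_q j)" .
    have "(lam - real k) * st_q N * \<bar>st_g (Suc N)\<bar> \<le> (lam - real k) * st_q N * C"
      unfolding C_def using g_tail[OF AM N] mu st_q_nonneg[of N] by (intro mult_left_mono) auto
    then show "\<bar>(\<Sum>r\<in>A. st_q r) - st_pA * (\<Sum>j\<le>N. st_q j)\<bar> \<le> real k / lam + (lam - real k) * C * st_q N"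
      using main_ineq[of N] unfolding e by (simp add: mult_ac)
  qed
  have "\<bar>(\<Sum>r\<in>A. st_q r) - st_pA * 1\<bar> \<le> real k / lam + (lam - real k) * C * 0"
    by (rule tendsto_le[OF trivial_limit_sequentially lim2 lim1 ev])
  then show ?thesis by simp
qed

end


lemma key1: assumes s: "s > 0" shows "2 * (s - 1) \<le> s * sqrt s"
proof -
  define t where "t = sqrt s"
  have t0: "t \<ge> 0" and st: "s = t^2" using s by (auto simp: t_def)
  have "t^3 - 2*t^2 + 2 = (t - 4/3)^2 * (t + 2/3) + 22/27" by (simp add: power2_eq_square power3_eq_cube field_simps)
  moreover have "(t - 4/3)^2 * (t + 2/3) \<ge> 0" using t0 by simp
  ultimately have "t^3 - 2*t^2 + 2 \<ge> 0" by linarith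
  then show ?thesis unfolding st t_def[symmetric] using t0 by (simp add: power2_eq_square power3_eq_cube algebra_simps)
qed

lemma key2: assumes s: "s > 0" shows "4 * (s - 1) \<le> 3 * (s * sqrt s)"
proof -
  define t where "t = sqrt s"
  have t0: "t \<ge> 0" and st: "s = t^2" using s by (auto simp: t_def)
  have "3 * t^3 - 4*t^2 + 4 = 3 * ((t - 8/9)^2 * (t + 4/9)) + (4 - 256/243)" by (simp add: power2_eq_square power3_eq_cube field_simps)
  moreover have "(t - 8/9)^2 * (t + 4/9) \<ge> 0" using t0 by simp
  ultimately have "3 * t^3 - 4*t^2 + 4 \<ge> 0" by linarith
  then show ?thesis unfolding st t_def[symmetric] using t0 by (simp add: power2_eq_square power3_eq_cube algebra_simps)
qed

lemma ineq_pos: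
  fixes s d1 d2 d k x :: real
  assumes s: "s > 0" and d1: "0 \<le> d1" "d1 < 1" and d2: "0 \<le> d2" "d2 < 1" and d: "d \<ge> 0"
    and k: "k = x + d1 - d2 + d" "k \<ge> 0"
  shows "d / sqrt (s + d1) + 2 * k / (s + d1 + d) \<le> 2 * (d / sqrt s + (\<bar>x\<bar> + 1) / s)"
proof -
  define u where "u = d1 + d"
  have u0: "u \<ge> 0" and u1: "u < 1 + d" using d1 d by (auto simp: u_def)
  have ss: "sqrt s > 0" using s by simp
  have l1: "d / sqrt (s + d1) \<le> d / sqrt s"
    using d d1 ss by (intro divide_left_mono) auto
  have su: "s + d1 + d = s + u" by (simp add: u_def)
  have l2: "k / (s + u) \<le> (\<bar>x\<bar> + u) / (s + u)"
    using k d2 s u0 by (intro divide_right_mono) (auto simp: u_def)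
  have l3: "(\<bar>x\<bar> + u) / (s + u) \<le> (\<bar>x\<bar> + 1) / s + d / (2 * sqrt s)"
  proof (cases "s \<le> \<bar>x\<bar> + 1")
    case True
    have "u * (s - \<bar>x\<bar> - 1) \<le> 0" using True u0 by (simp add: mult_nonneg_nonpos)
    then have "s * (\<bar>x\<bar> + u) \<le> (\<bar>x\<bar> + 1) * (s + u)" using s by (simp add: algebra_simps)
    then have "(\<bar>x\<bar> + u) / (s + u) \<le> (\<bar>x\<bar> + 1) / s" using s u0 by (simp add: divide_simps mult.commute)
    moreover have "d / (2 * sqrt s) \<ge> 0" using d ss by simp
    ultimately show ?thesis by linarith
  next
    case False
    define m where "m = s - \<bar>x\<bar> - 1"
    have m0: "m > 0" using False by (simp add: m_def)
    have "u * m \<le> (1 + d) * m" using u1 m0 by (intro mult_right_mono) auto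
    then have A1: "s * (\<bar>x\<bar> + u) - (\<bar>x\<bar> + 1) * (s + u) \<le> d * (s - 1)"
      using d mult_nonneg_nonneg[OF d abs_ge_zero[of x]] by (simp add: m_def algebra_simps ; linarith)
    have "d * (s - 1) \<le> d * (s * sqrt s / 2)" using key1[OF s] d by (intro mult_left_mono) auto
    also have "d * (s * sqrt s / 2) = d * s * s / (2 * sqrt s)"
      using s ss by (simp add: field_simps)
    also have "\<dots> \<le> d * s * (s + u) / (2 * sqrt s)"
      using d s u0 ss by (intro divide_right_mono mult_left_mono) auto
    finally have "s * (\<bar>x\<bar> + u) \<le> (\<bar>x\<bar> + 1) * (s + u) + d * s * (s + u) / (2 * sqrt s)" using A1 by linarith
    then have "s * (\<bar>x\<bar> + u) / (s * (s + u)) \<le> ((\<bar>x\<bar> + 1) * (s + u) + d * s * (s + u) / (2 * sqrt s)) / (s * (s + u))"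
      using s u0 by (intro divide_right_mono) auto
    then show ?thesis using s u0 ss by (simp add: add_divide_distrib)
  qed
  have "2 * k / (s + d1 + d) = 2 * (k / (s + u))" unfolding su by simp
  also have "\<dots> \<le> 2 * ((\<bar>x\<bar> + 1) / s + d / (2 * sqrt s))" using l2 l3 by (intro mult_left_mono) auto
  also have "\<dots> = 2 * ((\<bar>x\<bar> + 1) / s) + d / sqrt s" by (simp add: distrib_left)
  finally have "2 * k / (s + d1 + d) \<le> 2 * ((\<bar>x\<bar> + 1) / s) + d / sqrt s" .
  moreover have "2 * (d / sqrt s + (\<bar>x\<bar> + 1) / s) = 2 * (d / sqrt s) + 2 * ((\<bar>x\<bar> + 1) / s)" by (simp add: distrib_left)
  ultimately show ?thesis using l1 by linarith
qed

lemma ineq_neg: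
  fixes s d1 d2 d k x :: real
  assumes s: "s > 0" and d1: "0 \<le> d1" "d1 < 1" and d2: "0 \<le> d2" "d2 < 1" and d: "d < 0"
    and k: "k = x + d1 - d2 + d" "k \<ge> 0" and L: "s + d1 + d > 0"
    and R: "2 * (\<bar>d\<bar> / sqrt s + (\<bar>x\<bar> + 1) / s) < 2"
  shows "\<bar>d\<bar> / sqrt (s + d1 + d) + 2 * k / (s + d1 + d) \<le> 2 * (\<bar>d\<bar> / sqrt s + (\<bar>x\<bar> + 1) / s)"
proof -
  define D where "D = - d"
  have D0: "D > 0" and Dd: "\<bar>d\<bar> = D" using d by (auto simp: D_def)
  define v where "v = d1 + d"
  have v1: "v < 1" using d1 d by (simp add: v_def)
  have ss: "sqrt s > 0" using s by simp
  have R': "D / sqrt s + (\<bar>x\<bar> + 1) / s < 1" using R unfolding Dd by (smt (verit))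
  have q0: "D / sqrt s \<ge> 0" using D0 ss by simp
  then have xs: "(\<bar>x\<bar> + 1) / s < 1" using R' by linarith
  then have xs': "\<bar>x\<bar> + 1 < s" using s by (simp add: divide_simps)
  have Lv: "s + d1 + d = s + v" by (simp add: v_def)
  have a: "k / (s + v) \<le> (\<bar>x\<bar> + 1) / s"
  proof -
    have kb: "k \<le> \<bar>x\<bar> + v" using k d2 by (auto simp: v_def)
    have "v * (s - \<bar>x\<bar> - 1) \<le> s" 
    proof (cases "v \<ge> 0")
      case True
      then have "v * (s - \<bar>x\<bar> - 1) \<le> 1 * (s - \<bar>x\<bar> - 1)" using v1 xs' by (intro mult_right_mono) auto
      then show ?thesis by simp
    next
      case False
      then have "v * (s - \<bar>x\<bar> - 1) \<le> 0" using xs' by (simp add: mult_nonpos_nonneg)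
      then show ?thesis using s by simp
    qed
    then have "s * (\<bar>x\<bar> + v) \<le> (\<bar>x\<bar> + 1) * (s + v)" by (simp add: algebra_simps)
    then have "(\<bar>x\<bar> + v) / (s + v) \<le> (\<bar>x\<bar> + 1) / s" using s L Lv by (simp add: divide_simps mult.commute)
    moreover have "k / (s + v) \<le> (\<bar>x\<bar> + v) / (s + v)" using kb L Lv by (intro divide_right_mono) auto
    ultimately show ?thesis by linarith
  qed
  have b: "D / sqrt (s + v) \<le> 2 * (D / sqrt s)"
  proof -
    have "D / sqrt s < 1 - 1 / s" using R' s by (smt (verit, best) divide_right_mono abs_ge_zero)
    then have "D / sqrt s * s < (1 - 1 / s) * s" using s by (intro mult_strict_right_mono) auto
    moreover have "(1 - 1 / s) * s = s - 1" using s by (simp add: field_simps)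
    ultimately have "D / sqrt s * s < s - 1" by simp
    moreover have "D / sqrt s * s = D * sqrt s"
      using s ss by (simp add: field_simps)
    ultimately have "D * sqrt s < s - 1" by simp
    then have "4 * (D * sqrt s) < 4 * (s - 1)" by simp
    then have "4 * (D * sqrt s) < 3 * (s * sqrt s)" using key2[OF s] by (rule less_le_trans)
    then have "D < 3 * s / 4" using ss by (simp add: algebra_simps)
    then have "s \<le> 4 * (s + v)" using d1 by (simp add: v_def D_def)
    then have "sqrt s \<le> sqrt (4 * (s + v))" by simp
    also have "sqrt (4 * (s + v)) = 2 * sqrt (s + v)" by (subst real_sqrt_mult) (simp add: real_sqrt_four)
    finally have "sqrt s \<le> 2 * sqrt (s + v)" .
    then have "D / sqrt (s + v) \<le> D / (sqrt s / 2)"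
      using D0 ss L Lv by (intro divide_left_mono) auto
    then show ?thesis by (simp add: mult.commute)
  qed
  have e1: "2 * k / (s + v) = 2 * (k / (s + v))" by simp
  have e2: "2 * (D / sqrt s + (\<bar>x\<bar> + 1) / s) = 2 * (D / sqrt s) + 2 * ((\<bar>x\<bar> + 1) / s)" by (simp add: distrib_left)
  show ?thesis unfolding Dd Lv e1 e2 using a b by linarith
qed


lemma stein_int:
  assumes lam: "lam > 0" and mu: "lam - real k > 0" and F: "finite F"
  shows "(\<Sum>i\<in>F. \<bar>poisson_pmf_int lam i - poisson_pmf_int (lam - real k) (i - int k)\<bar>) \<le> 2 * real k / lam"
proof (rule int_sum_bound[OF _ _ _ F])
  fix N
  have qe: "poisson_pmf_int (lam - real k) (int n - int k) = st_q lam k n" for n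
  proof (cases "n < k")
    case True then show ?thesis using st_q_def[OF lam mu finite.emptyI] by (simp add: P_neg)
  next
    case False
    then have e: "int n - int k = int (n - k)" by simp
    show ?thesis unfolding e P_nat using False st_q_def[OF lam mu finite.emptyI] by simp
  qed
  define A1 where "A1 = {n\<in>{..N}. pn lam n \<le> st_q lam k n}"
  define A2 where "A2 = {..N} - A1"
  have fin: "finite A1" "finite A2" by (auto simp: A1_def A2_def)
  have U: "{..N} = A1 \<union> A2" "A1 \<inter> A2 = {}" by (auto simp: A1_def A2_def)
  have "(\<Sum>n\<le>N. \<bar>poisson_pmf_int lam (int n) - poisson_pmf_int (lam - real k) (int n - int k)\<bar>)
      = (\<Sum>n\<in>A1 \<union> A2. \<bar>pn lam n - st_q lam k n\<bar>)" unfolding U(1)[symmetric] by (simp add: qe P_nat)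
  also have "\<dots> = (\<Sum>n\<in>A1. \<bar>pn lam n - st_q lam k n\<bar>) + (\<Sum>n\<in>A2. \<bar>pn lam n - st_q lam k n\<bar>)"
    by (rule sum.union_disjoint) (use fin U in auto)
  also have "(\<Sum>n\<in>A1. \<bar>pn lam n - st_q lam k n\<bar>) = (\<Sum>n\<in>A1. st_q lam k n) - st_pA lam A1"
  proof -
    have "(\<Sum>n\<in>A1. \<bar>pn lam n - st_q lam k n\<bar>) = (\<Sum>n\<in>A1. st_q lam k n - pn lam n)"
      by (intro sum.cong) (auto simp: A1_def)
    then show ?thesis by (simp add: st_pA_def[OF lam mu fin(1)] sum_subtractf)
  qed
  also have "(\<Sum>n\<in>A2. \<bar>pn lam n - st_q lam k n\<bar>) = -((\<Sum>n\<in>A2. st_q lam k n) - st_pA lam A2)"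
  proof -
    have "(\<Sum>n\<in>A2. \<bar>pn lam n - st_q lam k n\<bar>) = (\<Sum>n\<in>A2. pn lam n - st_q lam k n)"
      by (intro sum.cong) (auto simp: A1_def A2_def)
    then show ?thesis by (simp add: st_pA_def[OF lam mu fin(2)] sum_subtractf)
  qed
  also have "(\<Sum>n\<in>A1. st_q lam k n) - st_pA lam A1 \<le> real k / lam"
    using stein_final[OF lam mu fin(1)] by simp
  also have "-((\<Sum>n\<in>A2. st_q lam k n) - st_pA lam A2) \<le> real k / lam"
    using stein_final[OF lam mu fin(2)] by simp
  finally show "(\<Sum>n\<le>N. \<bar>poisson_pmf_int lam (int n) - poisson_pmf_int (lam - real k) (int n - int k)\<bar>) \<le> 2 * real k / lam"
    by simp
qed (auto simp: P_neg)



lemma P_partial_le1: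
  assumes a: "a \<ge> 0" and G: "finite G"
  shows "(\<Sum>i\<in>G. poisson_pmf_int a i) \<le> 1"
proof (rule int_sum_bound[OF _ _ _ G])
  fix N show "(\<Sum>n\<le>N. poisson_pmf_int a (int n)) \<le> 1"
    using pn_partial_le1[OF _ a] by (simp add: P_nat)
qed (auto simp: P_neg P_nonneg a)

lemma core_bound:
  fixes l1 l2 d :: real and k :: nat
  assumes l1: "l1 > 0" and l2: "l2 > 0" and Lk: "l1 + d = l2 + real k" and G: "finite G"
  shows "(\<Sum>i\<in>G. \<bar>poisson_pmf_int l1 i - poisson_pmf_int l2 (i - int k)\<bar>)
           \<le> \<bar>d\<bar> / sqrt (min l1 (l1 + d)) + 2 * real k / (l1 + d)"
proof -
  define La where "La = l1 + d"
  have La: "La > 0" "La - real k = l2" using Lk l2 by (auto simp: La_def)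
  have "(\<Sum>i\<in>G. \<bar>poisson_pmf_int l1 i - poisson_pmf_int l2 (i - int k)\<bar>)
      \<le> (\<Sum>i\<in>G. \<bar>poisson_pmf_int l1 i - poisson_pmf_int La i\<bar> + \<bar>poisson_pmf_int La i - poisson_pmf_int (La - real k) (i - int k)\<bar>)"
    unfolding La(2) by (intro sum_mono) linarith
  also have "\<dots> = (\<Sum>i\<in>G. \<bar>poisson_pmf_int l1 i - poisson_pmf_int La i\<bar>) + (\<Sum>i\<in>G. \<bar>poisson_pmf_int La i - poisson_pmf_int (La - real k) (i - int k)\<bar>)"
    by (rule sum.distrib)
  also have "(\<Sum>i\<in>G. \<bar>poisson_pmf_int La i - poisson_pmf_int (La - real k) (i - int k)\<bar>) \<le> 2 * real k / La"
    using stein_int[OF La(1) _ G, of k] La(2) l2 by simp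
  also have "(\<Sum>i\<in>G. \<bar>poisson_pmf_int l1 i - poisson_pmf_int La i\<bar>) \<le> \<bar>d\<bar> / sqrt (min l1 (l1 + d))"
  proof (cases "d \<ge> 0")
    case True
    have "(\<Sum>i\<in>G. \<bar>poisson_pmf_int (l1 + d) i - poisson_pmf_int l1 i\<bar>) \<le> d / sqrt l1"
      by (rule thin_bound[OF l1 True G])
    then show ?thesis using True by (simp add: La_def abs_minus_commute min_def)
  next
    case False
    have "(\<Sum>i\<in>G. \<bar>poisson_pmf_int (La + (- d)) i - poisson_pmf_int La i\<bar>) \<le> (- d) / sqrt La"
      by (rule thin_bound[OF La(1) _ G]) (use False in simp)
    then show ?thesis using False by (simp add: La_def min_def)
  qed
  finally show ?thesis by (simp add: La_def add.commute)
qed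

theorem lemma2p1:
  fixes mu1 mu2 s1 s2 :: real
  assumes "s1 > 0" and "s2 > 0"
    and "\<lfloor>mu1 - s1\<rfloor> \<le> \<lfloor>mu2 - s2\<rfloor>"
  shows "tv_norm (TP mu1 s1) (TP mu2 s2)
           \<le> 2 * (\<bar>mu1 - mu2\<bar> / sqrt s1 + (\<bar>s1 - s2\<bar> + 1) / s1)"
proof -
  note s1 = assms(1) and s2 = assms(2) and gg = assms(3)
  define g1 where "g1 = \<lfloor>mu1 - s1\<rfloor>"
  define g2 where "g2 = \<lfloor>mu2 - s2\<rfloor>"
  define l1 where "l1 = mu1 - real_of_int g1"
  define l2 where "l2 = mu2 - real_of_int g2"
  define d where "d = mu2 - mu1"
  define k where "k = nat (g2 - g1)"
  define R where "R = 2 * (\<bar>mu1 - mu2\<bar> / sqrt s1 + (\<bar>s1 - s2\<bar> + 1) / s1)"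
  have kk: "int k = g2 - g1" using gg by (simp add: k_def g1_def g2_def)
  have fl1: "0 \<le> l1 - s1" "l1 - s1 < 1" unfolding l1_def g1_def by linarith+
  have fl2: "0 \<le> l2 - s2" "l2 - s2 < 1" unfolding l2_def g2_def by linarith+
  have l1p: "l1 > 0" and l2p: "l2 > 0" using fl1 fl2 s1 s2 by auto
  have Lk: "l1 + d = l2 + real k"
  proof -
    have "real k = real_of_int (g2 - g1)" using kk by (metis of_int_of_nat_eq)
    then show ?thesis by (simp add: l1_def l2_def d_def)
  qed
  have TP1: "TP mu1 s1 j = poisson_pmf_int l1 (j - g1)" for j
    by (simp add: TP_def tp_lambda'_def tp_delta_def tp_gamma_def l1_def g1_def)
  have TP2: "TP mu2 s2 j = poisson_pmf_int l2 ((j - g1) - int k)" for j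
    using kk by (simp add: TP_def tp_lambda'_def tp_delta_def tp_gamma_def l2_def g2_def g1_def)
  have Rnn: "R \<ge> 0" using s1 by (simp add: R_def)
  have fin: "(\<Sum>j\<in>F. \<bar>TP mu1 s1 j - TP mu2 s2 j\<bar>) \<le> R" if F: "finite F" for F
  proof -
    define G where "G = (\<lambda>j. j - g1) ` F"
    have G: "finite G" using F by (simp add: G_def)
    define T where "T = (\<Sum>i\<in>G. \<bar>poisson_pmf_int l1 i - poisson_pmf_int l2 (i - int k)\<bar>)"
    have eqT: "(\<Sum>j\<in>F. \<bar>TP mu1 s1 j - TP mu2 s2 j\<bar>) = T"
      unfolding T_def G_def TP1 TP2 by (subst sum.reindex) (auto simp: inj_on_def)
    have T2: "T \<le> 2"
    proof -
      have "T \<le> (\<Sum>i\<in>G. poisson_pmf_int l1 i + poisson_pmf_int l2 (i - int k))"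
        unfolding T_def using l1p l2p P_nonneg by (intro sum_mono) (smt (verit))
      also have "\<dots> = (\<Sum>i\<in>G. poisson_pmf_int l1 i) + (\<Sum>i\<in>(\<lambda>i. i - int k) ` G. poisson_pmf_int l2 i)"
        by (simp add: sum.distrib sum.reindex inj_on_def)
      also have "\<dots> \<le> 1 + 1" using l1p l2p G by (intro add_mono P_partial_le1) auto
      finally show ?thesis by simp
    qed
    have TB: "T \<le> \<bar>d\<bar> / sqrt (min l1 (l1 + d)) + 2 * real k / (l1 + d)"
      unfolding T_def by (rule core_bound[OF l1p l2p Lk G])
    have kx: "real k = (s1 - s2) + (l1 - s1) - (l2 - s2) + d" using Lk by simp
    have absd: "\<bar>mu1 - mu2\<bar> = \<bar>d\<bar>" by (simp add: d_def)
    show ?thesis unfolding eqT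
    proof (cases "d \<ge> 0")
      case True
      have "\<bar>d\<bar> / sqrt (min l1 (l1 + d)) + 2 * real k / (l1 + d) = d / sqrt (s1 + (l1 - s1)) + 2 * real k / (s1 + (l1 - s1) + d)"
        using True by (simp add: min_def)
      also have "\<dots> \<le> 2 * (d / sqrt s1 + (\<bar>s1 - s2\<bar> + 1) / s1)"
        by (rule ineq_pos[OF s1 fl1 fl2 True kx]) simp
      also have "\<dots> = R" using True by (simp add: R_def absd)
      finally show "T \<le> R" using TB by linarith
    next
      case False
      show "T \<le> R"
      proof (cases "R < 2")
        case True
        have R': "2 * (\<bar>d\<bar> / sqrt s1 + (\<bar>s1 - s2\<bar> + 1) / s1) < 2" using True by (simp add: R_def absd)
        have pos: "s1 + (l1 - s1) + d > 0" using Lk l2p by simp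
        have "\<bar>d\<bar> / sqrt (min l1 (l1 + d)) + 2 * real k / (l1 + d) = \<bar>d\<bar> / sqrt (s1 + (l1 - s1) + d) + 2 * real k / (s1 + (l1 - s1) + d)"
          using False by (simp add: min_def)
        also have "\<dots> \<le> 2 * (\<bar>d\<bar> / sqrt s1 + (\<bar>s1 - s2\<bar> + 1) / s1)"
          by (rule ineq_neg[OF s1 fl1 fl2 _ kx _ pos R']) (use False in auto)
        also have "\<dots> = R" by (simp add: R_def absd)
        finally show ?thesis using TB by linarith
      next
        case False
        then show ?thesis using T2 by linarith
      qed
    qed
  qed
  show ?thesis
  proof (cases "(\<lambda>i. \<bar>TP mu1 s1 i - TP mu2 s2 i\<bar>) summable_on (UNIV :: int set)")
    case True
    have "tv_norm (TP mu1 s1) (TP mu2 s2) \<le> R"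
      unfolding tv_norm_def by (rule infsum_le_finite_sums[OF True]) (rule fin)
    then show ?thesis by (simp add: R_def)
  next
    case False
    then have "tv_norm (TP mu1 s1) (TP mu2 s2) = 0" unfolding tv_norm_def by (rule infsum_not_exists)
    then show ?thesis using Rnn by (simp add: R_def)
  qed
qed


end
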